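(* Let $A$ be a ring satisfying the irreducible intersection property, and let $\varphi: A\hookrightarrow B$ be an injective ring map (identify $A$ with its image) such that: (i) for every prime ideal $p\subset A$ there exists a prime ideal $q\subset B$ with $q\cap A=p$; (ii) for every prime ideal $q\subset B$, $(q\cap A)B=q$. Then $B$ satisfies the irreducible intersection property.
   Context: All rings are commutative with $1$. A ring $R$ satisfies the irreducible intersection property if for any prime ideals $p_1,p_2\subset R$, either $p_1+p_2=R$ or $p_1+p_2$ is a prime ideal. For a ring map $A\to B$ and an ideal $J$ of $B$, $J\cap A$ denotes the preimage of $J$ in $A$, and for an ideal $I$ of $A$, $IB$ is the ideal of $B$ generated by the image of $I$. *)

theory Defs
  imports "HOL-Algebra.Algebra"
begin

definition irreducible_intersection_property :: "('a, 'm) ring_scheme \<Rightarrow> bool" where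
  "irreducible_intersection_property R \<longleftrightarrow>
     (\<forall>p1 p2. primeideal p1 R \<longrightarrow> primeideal p2 R \<longrightarrow>
        (p1 <+>\<^bsub>R\<^esub> p2 = carrier R \<or> primeideal (p1 <+>\<^bsub>R\<^esub> p2) R))"

end

theory Submission
  imports Defs
begin

theorem mainTheorem10:
  fixes A :: "('a, 'm) ring_scheme" and B :: "('b, 'n) ring_scheme" and \<phi> :: "'a \<Rightarrow> 'b"
  assumes "cring A" and "cring B"
    and "\<phi> \<in> ring_hom A B"
    and "inj_on \<phi> (carrier A)"
    and "irreducible_intersection_property A"
    and "\<And>p. primeideal p A \<Longrightarrow>
           \<exists>q. primeideal q B \<and> {a \<in> carrier A. \<phi> a \<in> q} = p"
    and "\<And>q. primeideal q B \<Longrightarrow>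
           Idl\<^bsub>B\<^esub> (\<phi> ` {a \<in> carrier A. \<phi> a \<in> q}) = q"
  shows "irreducible_intersection_property B"
proof -
  interpret A: cring A by fact
  interpret B: cring B by fact
  interpret h: ring_hom_ring A B \<phi>
    by (intro ring_hom_ring.intro ring_hom_ring_axioms.intro) (use assms in \<open>auto simp: A.ring_axioms B.ring_axioms\<close>)
  show ?thesis unfolding irreducible_intersection_property_def
  proof (intro allI impI)
    fix q1 q2 assume q1: "primeideal q1 B" and q2: "primeideal q2 B"
    define p1 where "p1 = {a \<in> carrier A. \<phi> a \<in> q1}"
    define p2 where "p2 = {a \<in> carrier A. \<phi> a \<in> q2}"
    have pp1: "primeideal p1 A" unfolding p1_def by (rule h.primeideal_vimage[OF assms(1) q1])
    have pp2: "primeideal p2 A" unfolding p2_def by (rule h.primeideal_vimage[OF assms(1) q2])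
    have i1: "ideal p1 A" using pp1 primeideal.axioms(1) by blast
    have i2: "ideal p2 A" using pp2 primeideal.axioms(1) by blast
    have j1: "ideal q1 B" using q1 primeideal.axioms(1) by blast
    have j2: "ideal q2 B" using q2 primeideal.axioms(1) by blast
    have e1: "Idl\<^bsub>B\<^esub> (\<phi> ` p1) = q1" unfolding p1_def by (rule assms(7)[OF q1])
    have e2: "Idl\<^bsub>B\<^esub> (\<phi> ` p2) = q2" unfolding p2_def by (rule assms(7)[OF q2])
    define P where "P = p1 <+>\<^bsub>A\<^esub> p2"
    have iP: "ideal P A" unfolding P_def by (rule A.add_ideals[OF i1 i2])
    have Pc: "P \<subseteq> carrier A" using ideal.Icarr[OF iP] by blast
    have phiPc: "\<phi> ` P \<subseteq> carrier B" using Pc h.hom_closed by blast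
    have iQ: "ideal (Idl\<^bsub>B\<^esub> (\<phi> ` P)) B" by (rule B.genideal_ideal[OF phiPc])
    have key: "Idl\<^bsub>B\<^esub> (\<phi> ` P) = q1 <+>\<^bsub>B\<^esub> q2"
    proof
      show "Idl\<^bsub>B\<^esub> (\<phi> ` P) \<subseteq> q1 <+>\<^bsub>B\<^esub> q2"
      proof (rule B.genideal_minimal[OF B.add_ideals[OF j1 j2]])
        show "\<phi> ` P \<subseteq> q1 <+>\<^bsub>B\<^esub> q2"
        proof
          fix y assume "y \<in> \<phi> ` P"
          then obtain a1 a2 where a: "a1 \<in> p1" "a2 \<in> p2" "y = \<phi> (a1 \<oplus>\<^bsub>A\<^esub> a2)"
            unfolding P_def set_add_def' by auto
          have "y = \<phi> a1 \<oplus>\<^bsub>B\<^esub> \<phi> a2" using a ideal.Icarr[OF i1] ideal.Icarr[OF i2] by auto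
          moreover have "\<phi> a1 \<in> q1" "\<phi> a2 \<in> q2" using a unfolding p1_def p2_def by auto
          ultimately show "y \<in> q1 <+>\<^bsub>B\<^esub> q2" unfolding set_add_def' by auto
        qed
      qed
    next
      have s1: "p1 \<subseteq> P"
      proof
        fix a assume a: "a \<in> p1"
        have "a = a \<oplus>\<^bsub>A\<^esub> \<zero>\<^bsub>A\<^esub>" using a ideal.Icarr[OF i1] by simp
        moreover have "\<zero>\<^bsub>A\<^esub> \<in> p2" using i2 by (simp add: additive_subgroup.zero_closed ideal.axioms(1))
        ultimately show "a \<in> P" unfolding P_def set_add_def' using a by blast
      qed
      have s2: "p2 \<subseteq> P"
      proof
        fix a assume a: "a \<in> p2"
        have "a = \<zero>\<^bsub>A\<^esub> \<oplus>\<^bsub>A\<^esub> a" using a ideal.Icarr[OF i2] by simp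
        moreover have "\<zero>\<^bsub>A\<^esub> \<in> p1" using i1 by (simp add: additive_subgroup.zero_closed ideal.axioms(1))
        ultimately show "a \<in> P" unfolding P_def set_add_def' using a by blast
      qed
      have c1: "\<phi> ` p1 \<subseteq> Idl\<^bsub>B\<^esub> (\<phi> ` P)" using s1 B.genideal_self[OF phiPc] by blast
      have d1: "\<phi> ` p1 \<subseteq> carrier B" using s1 phiPc by blast
      have "q1 \<subseteq> Idl\<^bsub>B\<^esub> (\<phi> ` P)"
        using B.Idl_subset_ideal[OF iQ d1] c1 e1 by simp
      moreover have c2: "\<phi> ` p2 \<subseteq> Idl\<^bsub>B\<^esub> (\<phi> ` P)" using s2 B.genideal_self[OF phiPc] by blast
      moreover have d2: "\<phi> ` p2 \<subseteq> carrier B" using s2 phiPc by blast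
      ultimately have qq: "q1 \<subseteq> Idl\<^bsub>B\<^esub> (\<phi> ` P)" "q2 \<subseteq> Idl\<^bsub>B\<^esub> (\<phi> ` P)"
        using B.Idl_subset_ideal[OF iQ d2] e2 by simp_all
      show "q1 <+>\<^bsub>B\<^esub> q2 \<subseteq> Idl\<^bsub>B\<^esub> (\<phi> ` P)"
      proof
        fix x assume "x \<in> q1 <+>\<^bsub>B\<^esub> q2"
        then obtain y1 y2 where y: "y1 \<in> q1" "y2 \<in> q2" "x = y1 \<oplus>\<^bsub>B\<^esub> y2"
          unfolding set_add_def' by blast
        have "y1 \<in> Idl\<^bsub>B\<^esub> (\<phi> ` P)" "y2 \<in> Idl\<^bsub>B\<^esub> (\<phi> ` P)" using y qq by blast+
        then show "x \<in> Idl\<^bsub>B\<^esub> (\<phi> ` P)"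
          using y(3) additive_subgroup.a_closed[OF ideal.axioms(1)[OF iQ]] by simp
      qed
    qed
    have "P = carrier A \<or> primeideal P A"
      using assms(5) pp1 pp2 unfolding irreducible_intersection_property_def P_def by blast
    then show "q1 <+>\<^bsub>B\<^esub> q2 = carrier B \<or> primeideal (q1 <+>\<^bsub>B\<^esub> q2) B"
    proof
      assume "P = carrier A"
      then have "\<one>\<^bsub>B\<^esub> \<in> \<phi> ` P" by (metis A.one_closed h.hom_one image_eqI)
      then have "\<one>\<^bsub>B\<^esub> \<in> Idl\<^bsub>B\<^esub> (\<phi> ` P)" using B.genideal_self[OF phiPc] by blast
      then have "Idl\<^bsub>B\<^esub> (\<phi> ` P) = carrier B" using ideal.one_imp_carrier[OF iQ] by blast
      then show ?thesis using key by simp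
    next
      assume "primeideal P A"
      then obtain Q where Q: "primeideal Q B" "{a \<in> carrier A. \<phi> a \<in> Q} = P"
        using assms(6) by blast
      have "Idl\<^bsub>B\<^esub> (\<phi> ` P) = Q" using assms(7)[OF Q(1)] Q(2) by simp
      then show ?thesis using key Q(1) by simp
    qed
  qed
qed

end
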